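(* Let $G=(V,E)$ be a transport graph with $n$ nodes and $m$ edges, incidence matrix $A\in\mathbb{R}^{m\times n}$, and positive node weights $g\in\mathbb{R}^n$. Let $F\in\mathbb{R}^m$ be a flow satisfying the capacity constraint $\sqrt{|A^T|F^2}\le g$, and let $u\in\mathbb{R}^n$. Then $$F^TAu\le g^T\sqrt{|A^T|(Au)^2}.$$
   Context: A transport graph is a graph with a distinguished source node $s$ and sink node $t$ together with edges linking some nodes to the source and some to the sink; $n$ and $m$ include these nodes and edges. Each edge $e_{ij}$ is oriented from $v_i$ to $v_j$; a flow is a vector $F\in\mathbb{R}^m$ indexed by edges. The incidence matrix $A$ has $A_{e_{ij},v_k}=+1$ if $k=i$, $-1$ if $k=j$, $0$ otherwise, so $(Au)_{e_{ij}}=u_i-u_j$; $|A|$ is the entrywise absolute value of $A$. For vectors, $v^2$ is the entrywise square, $\sqrt{v}$ the entrywise square root, and inequalities are entrywise. *)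

theory Defs
  imports "HOL-Analysis.Analysis"
begin

definition incidence :: "('e \<Rightarrow> 'v) \<Rightarrow> ('e \<Rightarrow> 'v) \<Rightarrow> real ^ 'v ^ 'e" where
  "incidence src dst = (\<chi> e k. if k = src e then 1 else if k = dst e then -1 else 0)"

definition mat_abs :: "real ^ 'n ^ 'm \<Rightarrow> real ^ 'n ^ 'm" where
  "mat_abs M = (\<chi> i j. \<bar>M $ i $ j\<bar>)"

definition vec_sq :: "real ^ 'n \<Rightarrow> real ^ 'n" where
  "vec_sq v = (\<chi> i. (v $ i) ^ 2)"

definition vec_sqrt :: "real ^ 'n \<Rightarrow> real ^ 'n" where
  "vec_sqrt v = (\<chi> i. sqrt (v $ i))"

end

theory Submission
  imports Defs
begin

theorem proposition2:
  fixes src dst :: "'e::finite \<Rightarrow> 'v::finite"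
    and s t :: 'v
    and g u :: "real ^ 'v"
    and F :: "real ^ 'e"
  assumes transport: "s \<noteq> t"
    and no_loops: "\<And>e. src e \<noteq> dst e"
    and g_pos: "\<And>k. g $ k > 0"
    and capacity: "\<And>k. vec_sqrt (transpose (mat_abs (incidence src dst)) *v vec_sq F) $ k \<le> g $ k"
  shows "F \<bullet> (incidence src dst *v u)
           \<le> g \<bullet> vec_sqrt (transpose (mat_abs (incidence src dst)) *v vec_sq (incidence src dst *v u))"
proof -
  define d where "d = incidence src dst *v u"
  define A where "A = (\<lambda>k. {e. k = src e \<or> k = dst e})"
  have M: "transpose (mat_abs (incidence src dst)) *v w = (\<chi> k. \<Sum>e\<in>A k. w $ e)" for w :: "real ^ 'e"
  proof -
    have "(\<Sum>e\<in>UNIV. (if k = src e \<or> k = dst e then 1 else 0) * w $ e) = (\<Sum>e\<in>A k. w $ e)" for k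
      unfolding A_def by (simp add: sum.If_cases if_distrib[of "\<lambda>c. c * _"])
    moreover have "mat_abs (incidence src dst) $ e $ k = (if k = src e \<or> k = dst e then 1 else 0)" for e k
      by (auto simp: mat_abs_def incidence_def)
    ultimately show ?thesis
      by (simp add: vec_eq_iff matrix_vector_mult_def transpose_def)
  qed
  have P: "vec_sqrt (transpose (mat_abs (incidence src dst)) *v vec_sq w) $ k = L2_set (\<lambda>e. w $ e) (A k)"
    for w :: "real ^ 'e" and k
    unfolding M by (simp add: vec_sqrt_def vec_sq_def L2_set_def)
  have "F \<bullet> d = (\<Sum>e\<in>UNIV. F $ e * d $ e)" by (simp add: inner_vec_def)
  also have "\<dots> \<le> (\<Sum>e\<in>UNIV. \<bar>F $ e\<bar> * \<bar>d $ e\<bar>)"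
    by (rule sum_mono) (metis abs_ge_self abs_mult)
  also have "\<dots> \<le> (\<Sum>e\<in>UNIV. \<Sum>k\<in>UNIV. if e \<in> A k then \<bar>F $ e\<bar> * \<bar>d $ e\<bar> else 0)"
  proof (rule sum_mono)
    fix e
    have "(\<Sum>k\<in>UNIV. if e \<in> A k then \<bar>F $ e\<bar> * \<bar>d $ e\<bar> else 0)
       \<ge> (if e \<in> A (src e) then \<bar>F $ e\<bar> * \<bar>d $ e\<bar> else 0)"
      by (rule member_le_sum) auto
    then show "\<bar>F $ e\<bar> * \<bar>d $ e\<bar> \<le> (\<Sum>k\<in>UNIV. if e \<in> A k then \<bar>F $ e\<bar> * \<bar>d $ e\<bar> else 0)"
      by (simp add: A_def)
  qed
  also have "\<dots> = (\<Sum>k\<in>UNIV. \<Sum>e\<in>A k. \<bar>F $ e\<bar> * \<bar>d $ e\<bar>)"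
    by (subst sum.swap) (simp add: sum.If_cases Int_def)
  also have "\<dots> \<le> (\<Sum>k\<in>UNIV. L2_set (\<lambda>e. F $ e) (A k) * L2_set (\<lambda>e. d $ e) (A k))"
    by (rule sum_mono) (rule L2_set_mult_ineq)
  also have "\<dots> \<le> (\<Sum>k\<in>UNIV. g $ k * L2_set (\<lambda>e. d $ e) (A k))"
    by (rule sum_mono, rule mult_right_mono) (use capacity P in auto)
  also have "\<dots> = g \<bullet> vec_sqrt (transpose (mat_abs (incidence src dst)) *v vec_sq d)"
    unfolding inner_vec_def P by simp
  finally show ?thesis by (simp add: d_def)
qed

end
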